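(* Let $p>0$ and let $(u_n)_{n\ge0}$ be a sequence in $E^1$ with partial sums $s_n=\sum_{k=0}^n u_k$. If the series $\sum u_n$ is $E_p$ summable to $\nu\in E^1$ and $\sqrt{n}\,D(u_n,\overline{0})=O(1)$ as $n\to\infty$, then the series $\sum u_n$ is bounded, i.e. there is $M>0$ with $D(s_n,\overline{0})<M$ for all $n$.
   Context: $E^1$ denotes the set of fuzzy numbers: functions $u:\mathbb{R}\to[0,1]$ that are normal, fuzzy convex, upper semicontinuous, and have compact support $\overline{\{t:u(t)>0\}}$. For $\alpha\in(0,1]$ the $\alpha$-level set is $[u]_\alpha=\{t:u(t)\ge\alpha\}$ and $[u]_0=\overline{\{t:u(t)>0\}}$; each is a compact interval $[u^-_\alpha,u^+_\alpha]$. Addition and scalar multiplication are defined levelwise: $[u+v]_\alpha=[u^-_\alpha+v^-_\alpha,u^+_\alpha+v^+_\alpha]$ and $[ku]_\alpha=k[u]_\alpha$ for $k\in\mathbb{R}$. The metric is $D(u,v)=\sup_{\alpha\in[0,1]}\max\{|u^-_\alpha-v^-_\alpha|,|u^+_\alpha-v^+_\alpha|\}$. $\overline{0}$ is the fuzzy number equal to $1$ at $0$ and $0$ elsewhere. A series $\sum u_n$ of fuzzy numbers is $E_p$ summable to $\nu$ if its sequence of partial sums $(s_n)$ has Euler means $\frac{1}{(p+1)^n}\sum_{k=0}^n\binom{n}{k}p^{n-k}s_k$ converging to $\nu$ in $D$. The paper denotes by $bs(F)$ the set of series of fuzzy numbers with bounded partial sums and states the conclusion as $(u_n)\in bs(F)$.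 *)

theory Defs
  imports "HOL-Analysis.Analysis" "HOL-Library.Landau_Symbols"
begin

type_synonym fuzzy = "real \<Rightarrow> real"

definition fuzzy_number :: "fuzzy \<Rightarrow> bool" where
  "fuzzy_number u \<longleftrightarrow>
     (\<forall>t. 0 \<le> u t \<and> u t \<le> 1) \<and>
     (\<exists>t. u t = 1) \<and>
     (\<forall>x y l. 0 \<le> l \<and> l \<le> 1 \<longrightarrow> min (u x) (u y) \<le> u (l * x + (1 - l) * y)) \<and>
     (\<forall>x. \<forall>e>0. \<forall>\<^sub>F y in at x. u y < u x + e) \<and>
     compact (closure {t. u t > 0})"

definition level :: "fuzzy \<Rightarrow> real \<Rightarrow> real set" where
  "level u \<alpha> = (if \<alpha> = 0 then closure {t. u t > 0} else {t. u t \<ge> \<alpha>})"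

definition lower :: "fuzzy \<Rightarrow> real \<Rightarrow> real" where
  "lower u \<alpha> = Inf (level u \<alpha>)"

definition upper :: "fuzzy \<Rightarrow> real \<Rightarrow> real" where
  "upper u \<alpha> = Sup (level u \<alpha>)"

(* the fuzzy number whose alpha-levels (alpha in (0,1]) are [L alpha, U alpha] *)
definition of_levels :: "(real \<Rightarrow> real) \<Rightarrow> (real \<Rightarrow> real) \<Rightarrow> fuzzy" where
  "of_levels L U = (\<lambda>t. Sup ({0} \<union> {\<alpha>. 0 < \<alpha> \<and> \<alpha> \<le> 1 \<and> L \<alpha> \<le> t \<and> t \<le> U \<alpha>}))"

definition fadd :: "fuzzy \<Rightarrow> fuzzy \<Rightarrow> fuzzy" where
  "fadd u v = of_levels (\<lambda>\<alpha>. lower u \<alpha> + lower v \<alpha>) (\<lambda>\<alpha>. upper u \<alpha> + upper v \<alpha>)"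

definition fscale :: "real \<Rightarrow> fuzzy \<Rightarrow> fuzzy" where
  "fscale k u = of_levels
     (\<lambda>\<alpha>. if 0 \<le> k then k * lower u \<alpha> else k * upper u \<alpha>)
     (\<lambda>\<alpha>. if 0 \<le> k then k * upper u \<alpha> else k * lower u \<alpha>)"

definition fzero :: fuzzy where
  "fzero = (\<lambda>t. if t = 0 then 1 else 0)"

definition fdist :: "fuzzy \<Rightarrow> fuzzy \<Rightarrow> real" where
  "fdist u v = (SUP \<alpha>\<in>{0..1}. max \<bar>lower u \<alpha> - lower v \<alpha>\<bar> \<bar>upper u \<alpha> - upper v \<alpha>\<bar>)"

fun fsum_upto :: "(nat \<Rightarrow> fuzzy) \<Rightarrow> nat \<Rightarrow> fuzzy" where
  "fsum_upto f 0 = f 0"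
| "fsum_upto f (Suc n) = fadd (fsum_upto f n) (f (Suc n))"

definition euler_mean :: "real \<Rightarrow> (nat \<Rightarrow> fuzzy) \<Rightarrow> nat \<Rightarrow> fuzzy" where
  "euler_mean p s n = fscale (1 / (p + 1) ^ n)
      (fsum_upto (\<lambda>k. fscale (real (n choose k) * p ^ (n - k)) (s k)) n)"

definition Ep_summable_to :: "real \<Rightarrow> (nat \<Rightarrow> fuzzy) \<Rightarrow> fuzzy \<Rightarrow> bool" where
  "Ep_summable_to p u \<nu> \<longleftrightarrow>
     (\<lambda>n. fdist (euler_mean p (fsum_upto u) n) \<nu>) \<longlonglongrightarrow> 0"

end

theory Submission
  imports Defs
begin


lemma binom_step:
  fixes x y :: real and f :: "nat \<Rightarrow> real"
  shows "(\<Sum>k\<le>Suc n. real (Suc n choose k) * x^k * y^(Suc n - k) * f k) =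
         (\<Sum>k\<le>n. real (n choose k) * x^k * y^(n - k) * (y * f k + x * f (Suc k)))"
proof -
  define h where "h k = real (n choose k) * x^k * y^(Suc n - k) * f k" for k
  have A: "(\<Sum>k\<le>Suc n. real (Suc n choose k) * x^k * y^(Suc n - k) * f k)
      = y^(Suc n) * f 0 + (\<Sum>j\<le>n. x * (real (n choose j) * x^j * y^(n - j) * f (Suc j)))
        + (\<Sum>j\<le>n. h (Suc j))"
    by (subst sum.atMost_Suc_shift) (simp add: h_def algebra_simps sum.distrib)
  have B: "(\<Sum>j\<le>n. h (Suc j)) = (\<Sum>k\<le>Suc n. h k) - h 0"
    by (subst sum.atMost_Suc_shift) simp
  have C: "(\<Sum>k\<le>Suc n. h k) = (\<Sum>k\<le>n. h k)"
    by (simp add: h_def)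
  have D: "(\<Sum>k\<le>n. h k) = (\<Sum>k\<le>n. y * (real (n choose k) * x^k * y^(n - k) * f k))"
    by (rule sum.cong) (auto simp: h_def Suc_diff_le)
  have E: "h 0 = y^(Suc n) * f 0" by (simp add: h_def)
  show ?thesis
    unfolding A B C D E by (simp add: algebra_simps sum.distrib sum_distrib_left)
qed

lemma moments:
  fixes x :: real
  shows "(\<Sum>k\<le>n. real (n choose k) * x^k * (1-x)^(n - k) * 1) = 1
       \<and> (\<Sum>k\<le>n. real (n choose k) * x^k * (1-x)^(n - k) * real k) = n * x
       \<and> (\<Sum>k\<le>n. real (n choose k) * x^k * (1-x)^(n - k) * (real k)^2) = n*x*(1-x) + (n*x)^2"
proof (induction n)
  case 0 then show ?case by simp
next
  case (Suc n)
  define W where "W k = real (n choose k) * x^k * (1-x)^(n - k)" for k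
  have s0: "(\<Sum>k\<le>n. W k) = 1" and s1: "(\<Sum>k\<le>n. W k * real k) = n*x"
    and s2: "(\<Sum>k\<le>n. W k * (real k)^2) = n*x*(1-x) + (n*x)^2"
    using Suc.IH by (simp_all add: W_def)
  have e0: "(\<Sum>k\<le>Suc n. real (Suc n choose k) * x^k * (1-x)^(Suc n - k) * 1)
      = (\<Sum>k\<le>n. W k * ((1-x) * 1 + x * 1))"
    unfolding W_def by (rule binom_step)
  have e1: "(\<Sum>k\<le>Suc n. real (Suc n choose k) * x^k * (1-x)^(Suc n - k) * real k)
      = (\<Sum>k\<le>n. W k * ((1-x) * real k + x * real (Suc k)))"
    unfolding W_def by (rule binom_step)
  have e2: "(\<Sum>k\<le>Suc n. real (Suc n choose k) * x^k * (1-x)^(Suc n - k) * (real k)^2)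
      = (\<Sum>k\<le>n. W k * ((1-x) * (real k)^2 + x * (real (Suc k))^2))"
    unfolding W_def by (rule binom_step)
  have r1: "(\<Sum>k\<le>n. W k * ((1-x) * real k + x * real (Suc k))) = (\<Sum>k\<le>n. W k * real k) + x * (\<Sum>k\<le>n. W k)"
    by (simp add: algebra_simps sum.distrib sum_distrib_left)
  have r2: "(\<Sum>k\<le>n. W k * ((1-x) * (real k)^2 + x * (real (Suc k))^2)) =
      (\<Sum>k\<le>n. W k * (real k)^2) + 2*x*(\<Sum>k\<le>n. W k * real k) + x * (\<Sum>k\<le>n. W k)"
    by (simp add: algebra_simps sum.distrib sum_distrib_left power2_eq_square)
  show ?case
    unfolding e1 e2 r1 r2 s0 s1 s2 using e0 s0
    by (simp add: algebra_simps power2_eq_square)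
qed




lemma sqrt_step: "1 / sqrt (real (Suc k)) \<le> 2 * (sqrt (real (Suc k)) - sqrt (real k))"
proof -
  define a where "a = sqrt (real k)"
  define b where "b = sqrt (real (Suc k))"
  have b0: "b > 0" by (simp add: b_def)
  have a2: "a^2 = real k" by (simp add: a_def)
  have b2: "b^2 = real k + 1" by (simp add: b_def)
  have "0 \<le> (a - b)^2" by simp
  hence "2*a*b \<le> a^2 + b^2" by (simp add: power2_eq_square algebra_simps)
  hence "1 \<le> b * (2 * (b - a))" using a2 b2 by (simp add: power2_eq_square algebra_simps)
  hence "1 / b \<le> 2 * (b - a)" using b0 by (simp add: divide_le_eq mult.commute)
  thus ?thesis by (simp add: a_def b_def)
qed

lemma partial_diff:
  fixes a :: "nat \<Rightarrow> real"
  assumes ha: "\<forall>j\<ge>1. \<bar>a j\<bar> * sqrt (real j) \<le> C" and mk: "m \<le> k"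
  shows "\<bar>(\<Sum>i\<le>k. a i) - (\<Sum>i\<le>m. a i)\<bar> \<le> 2*C*(sqrt (real k) - sqrt (real m))"
  using mk
proof (induction k rule: dec_induct)
  case base then show ?case by simp
next
  case (step k)
  have "\<bar>a (Suc k)\<bar> * sqrt (real (Suc k)) \<le> C" using ha[rule_format, of "Suc k"] by simp
  hence "\<bar>a (Suc k)\<bar> \<le> C * (1 / sqrt (real (Suc k)))"
    by (simp add: le_divide_eq)
  also have "\<dots> \<le> C * (2 * (sqrt (real (Suc k)) - sqrt (real k)))"
  proof (rule mult_left_mono[OF sqrt_step])
    show "0 \<le> C" using ha[rule_format, of 1] by (meson abs_ge_zero order_trans real_sqrt_ge_zero zero_le_mult_iff le_numeral_extra(4) of_nat_0_le_iff)
  qed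
  finally have "\<bar>a (Suc k)\<bar> \<le> 2*C*(sqrt (real (Suc k)) - sqrt (real k))" by (simp add: algebra_simps)
  moreover have "\<bar>(\<Sum>i\<le>Suc k. a i) - (\<Sum>i\<le>m. a i)\<bar> \<le> \<bar>(\<Sum>i\<le>k. a i) - (\<Sum>i\<le>m. a i)\<bar> + \<bar>a (Suc k)\<bar>"
    by simp
  ultimately show ?case using step.IH by (simp add: algebra_simps)
qed

lemma partial_diff_abs:
  fixes a :: "nat \<Rightarrow> real"
  assumes ha: "\<forall>j\<ge>1. \<bar>a j\<bar> * sqrt (real j) \<le> C"
  shows "\<bar>(\<Sum>i\<le>k. a i) - (\<Sum>i\<le>m. a i)\<bar> \<le> 2*C*\<bar>sqrt (real k) - sqrt (real m)\<bar>"
proof (cases "m \<le> k")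
  case True
  then show ?thesis using partial_diff[OF ha True] by simp
next
  case False
  then have "k \<le> m" by simp
  have e: "\<bar>sqrt (real k) - sqrt (real m)\<bar> = sqrt (real m) - sqrt (real k)"
    using \<open>k \<le> m\<close> by simp
  from partial_diff[OF ha \<open>k \<le> m\<close>] show ?thesis
    unfolding e by (simp add: abs_minus_commute)
qed

lemma key_ineq:
  fixes k m :: real
  assumes "m \<ge> 1" "k \<ge> 0"
  shows "2*\<bar>sqrt k - sqrt m\<bar> \<le> (k - m)^2/m + 1"
proof -
  define s where "s = sqrt k"
  define r where "r = sqrt m"
  have r0: "r > 0" using assms by (simp add: r_def)
  have s0: "s \<ge> 0" using assms by (simp add: s_def)
  have ks: "k = s^2" using assms by (simp add: s_def)
  have mr: "m = r^2" using assms by (simp add: r_def)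
  define t where "t = \<bar>s - r\<bar>"
  have "(k - m)^2 = t^2 * (s + r)^2" by (simp add: ks mr t_def power2_eq_square algebra_simps)
  moreover have "t^2 * r^2 \<le> t^2 * (s+r)^2"
    using s0 r0 by (intro mult_left_mono power_mono) auto
  ultimately have A: "t^2 * r^2 \<le> (k - m)^2" by simp
  have "0 \<le> (t - 1)^2" by simp
  hence B: "2 * t \<le> t^2 + 1" by (simp add: power2_eq_square algebra_simps)
  have "2 * t * r^2 \<le> (t^2 + 1) * r^2" using B by (simp add: mult_right_mono)
  also have "\<dots> \<le> (k - m)^2 + r^2" using A by (simp add: algebra_simps)
  finally have C: "2 * t * m \<le> (k - m)^2 + m" by (simp add: mr)
  have m0: "m > 0" using assms by simp
  have "2 * t \<le> ((k - m)^2 + m) / m" using C m0 by (simp add: le_divide_eq)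
  also have "\<dots> = (k - m)^2/m + 1" using m0 by (simp add: field_simps)
  finally show ?thesis by (simp add: t_def s_def r_def)
qed




lemma weight_conv:
  fixes p :: real assumes p: "p > 0" and kn: "k \<le> n"
  shows "1/(p+1)^n * (real (n choose k) * p^(n-k)) =
         real (n choose k) * (1/(p+1))^k * (1 - 1/(p+1))^(n-k)"
proof -
  have e1: "1 - 1/(p+1) = p/(p+1)" using p by (simp add: field_simps)
  have e2: "(p+1)^n = (p+1)^k * (p+1)^(n-k)" using kn by (simp add: power_add[symmetric])
  show ?thesis unfolding e1 e2 using p by (simp add: power_divide field_simps)
qed

lemma tauber_real:
  fixes a :: "nat \<Rightarrow> real" and p B C :: real
  assumes p: "p > 0" and ha: "\<forall>j\<ge>1. \<bar>a j\<bar> * sqrt (real j) \<le> C"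
    and hT: "\<forall>n. \<bar>1/(p+1)^n * (\<Sum>k\<le>n. (real (n choose k) * p^(n-k)) * (\<Sum>i\<le>k. a i))\<bar> \<le> B"
  shows "\<bar>\<Sum>i\<le>m. a i\<bar> \<le> B + \<bar>a 0\<bar> + 4*C"
proof -
  have C0: "C \<ge> 0" using ha[rule_format, of 1] by (metis abs_ge_zero mult_nonneg_nonneg order_trans real_sqrt_ge_zero of_nat_0_le_iff le_refl)
  have B0: "B \<ge> 0" using hT[rule_format, of 0] by (meson abs_ge_zero order_trans)
  show ?thesis
  proof (cases "m = 0")
    case True then show ?thesis using B0 C0 by simp
  next
    case False
    hence m1: "real m \<ge> 1" by simp
    define S where "S k = (\<Sum>i\<le>k. a i)" for k
    define q where "q = 1/(p+1)"
    have q0: "q > 0" and q1: "q < 1" using p by (auto simp: q_def)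
    define n where "n = nat \<lceil>real m * (p+1)\<rceil>"
    have "0 \<le> real m * (p+1)" using p by simp
    hence cz: "0 \<le> \<lceil>real m * (p+1)\<rceil>" by simp
    have rn: "real n = of_int \<lceil>real m * (p+1)\<rceil>" unfolding n_def using cz by simp
    have nge: "real n \<ge> real m * (p+1)" unfolding rn by (rule le_of_int_ceiling)
    have nlt: "real n < real m * (p+1) + 1" unfolding rn using ceiling_correct[of "real m * (p+1)"] by linarith
    have nq1: "real n * q \<ge> real m" using nge p by (simp add: q_def field_simps)
    have nq2: "real n * q < real m + 1"
    proof -
      have "real n * q < (real m * (p+1) + 1) * q" using nlt q0 by (simp add: mult_strict_right_mono)
      also have "\<dots> = real m + q" using p by (simp add: q_def field_simps)
      finally show ?thesis using q1 by simp
    qed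
    define W where "W k = real (n choose k) * q^k * (1-q)^(n-k)" for k
    have W0: "W k \<ge> 0" for k using q0 q1 by (simp add: W_def)
    have mom: "(\<Sum>k\<le>n. W k * 1) = 1 \<and> (\<Sum>k\<le>n. W k * real k) = n * q
        \<and> (\<Sum>k\<le>n. W k * (real k)^2) = n*q*(1-q) + (n*q)^2"
      unfolding W_def by (rule moments)
    have M0: "(\<Sum>k\<le>n. W k) = 1" using mom by simp
    have M1: "(\<Sum>k\<le>n. W k * real k) = n * q" using mom by simp
    have M2: "(\<Sum>k\<le>n. W k * (real k)^2) = n*q*(1-q) + (n*q)^2" using mom by simp
    have V: "(\<Sum>k\<le>n. W k * (real k - real m)^2) = n*q*(1-q) + (n*q - m)^2"
    proof -
      have "(\<Sum>k\<le>n. W k * (real k - real m)^2) =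
          (\<Sum>k\<le>n. W k * (real k)^2) - 2 * m * (\<Sum>k\<le>n. W k * real k) + m^2 * (\<Sum>k\<le>n. W k)"
        by (simp add: power2_eq_square algebra_simps sum.distrib sum_subtractf sum_distrib_left)
      then show ?thesis unfolding M0 M1 M2 by (simp add: power2_eq_square algebra_simps)
    qed
    have T: "\<bar>\<Sum>k\<le>n. W k * S k\<bar> \<le> B"
    proof -
      have "(\<Sum>k\<le>n. W k * S k) = 1/(p+1)^n * (\<Sum>k\<le>n. (real (n choose k) * p^(n-k)) * S k)"
        unfolding sum_distrib_left
      proof (rule sum.cong[OF refl])
        fix k assume "k \<in> {..n}" hence kn: "k \<le> n" by simp
        show "W k * S k = 1/(p+1)^n * (real (n choose k) * p^(n-k) * S k)"
          unfolding W_def q_def weight_conv[OF p kn, symmetric] by simp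
      qed
      then show ?thesis using hT[rule_format, of n] by (simp add: S_def)
    qed
    have D: "\<bar>S k - S m\<bar> \<le> C * ((real k - real m)^2 / real m + 1)" for k
    proof -
      have "\<bar>S k - S m\<bar> \<le> 2*C*\<bar>sqrt (real k) - sqrt (real m)\<bar>"
        unfolding S_def by (rule partial_diff_abs[OF ha])
      also have "\<dots> = C * (2*\<bar>sqrt (real k) - sqrt (real m)\<bar>)" by simp
      also have "\<dots> \<le> C * ((real k - real m)^2 / real m + 1)"
        using key_ineq[OF m1, of "real k"] C0 by (intro mult_left_mono) auto
      finally show ?thesis .
    qed
    have "S m = (\<Sum>k\<le>n. W k * S k) - (\<Sum>k\<le>n. W k * (S k - S m))"
    proof -
      have "(\<Sum>k\<le>n. W k * (S k - S m)) = (\<Sum>k\<le>n. W k * S k) - S m * (\<Sum>k\<le>n. W k)"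
        by (simp add: algebra_simps sum_subtractf sum_distrib_left)
      then show ?thesis using M0 by simp
    qed
    hence "\<bar>S m\<bar> \<le> \<bar>\<Sum>k\<le>n. W k * S k\<bar> + \<bar>\<Sum>k\<le>n. W k * (S k - S m)\<bar>" by linarith
    also have "\<bar>\<Sum>k\<le>n. W k * (S k - S m)\<bar> \<le> (\<Sum>k\<le>n. W k * (C * ((real k - real m)^2 / real m + 1)))"
    proof -
      have "\<bar>\<Sum>k\<le>n. W k * (S k - S m)\<bar> \<le> (\<Sum>k\<le>n. \<bar>W k * (S k - S m)\<bar>)" by (rule sum_abs)
      also have "\<dots> \<le> (\<Sum>k\<le>n. W k * (C * ((real k - real m)^2 / real m + 1)))"
        by (rule sum_mono) (simp add: abs_mult abs_of_nonneg[OF W0] mult_left_mono[OF D W0])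
      finally show ?thesis .
    qed
    also have "(\<Sum>k\<le>n. W k * (C * ((real k - real m)^2 / real m + 1)))
        = C / real m * (\<Sum>k\<le>n. W k * (real k - real m)^2) + C * (\<Sum>k\<le>n. W k)"
      by (simp add: algebra_simps sum.distrib sum_distrib_left)
    also have "\<dots> = C / real m * (n*q*(1-q) + (n*q - m)^2) + C" unfolding V M0 by simp
    also have "\<dots> \<le> C / real m * (3 * real m) + C"
    proof -
      have "n*q*(1-q) \<le> n*q" using q0 q1 by (intro mult_left_le) auto
      hence a1: "n*q*(1-q) \<le> 2 * real m" using nq2 m1 by linarith
      have a2: "(n*q - m)^2 \<le> real m"
      proof -
        have "0 \<le> n*q - m" "n*q - m \<le> 1" using nq1 nq2 by auto
        hence "(n*q - m)^2 \<le> 1" by (simp add: power_le_one)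
        thus ?thesis using m1 by simp
      qed
      have "0 \<le> C / real m" using C0 m1 by simp
      then show ?thesis using a1 a2 by (intro add_right_mono mult_left_mono) auto
    qed
    also have "\<dots> = 4 * C" using m1 by simp
    finally have "\<bar>S m\<bar> \<le> \<bar>\<Sum>k\<le>n. W k * S k\<bar> + 4 * C" by simp
    then show ?thesis using T by (simp add: S_def)
  qed
qed




definition goodLU :: "(real \<Rightarrow> real) \<Rightarrow> (real \<Rightarrow> real) \<Rightarrow> real \<Rightarrow> real \<Rightarrow> bool" where
  "goodLU L U l0 u0 \<longleftrightarrow>
    (\<forall>\<alpha> \<beta>. 0 < \<alpha> \<longrightarrow> \<alpha> \<le> \<beta> \<longrightarrow> \<beta> \<le> 1 \<longrightarrow> L \<alpha> \<le> L \<beta>) \<and>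
    (\<forall>\<alpha> \<beta>. 0 < \<alpha> \<longrightarrow> \<alpha> \<le> \<beta> \<longrightarrow> \<beta> \<le> 1 \<longrightarrow> U \<beta> \<le> U \<alpha>) \<and>
    (\<forall>\<alpha>. 0 < \<alpha> \<longrightarrow> \<alpha> \<le> 1 \<longrightarrow> L \<alpha> \<le> U \<alpha>) \<and>
    (\<forall>\<alpha> e. 0 < \<alpha> \<longrightarrow> \<alpha> \<le> 1 \<longrightarrow> 0 < e \<longrightarrow> (\<exists>\<beta>. 0 < \<beta> \<and> \<beta> < \<alpha> \<and> L \<alpha> - e \<le> L \<beta>)) \<and>
    (\<forall>\<alpha> e. 0 < \<alpha> \<longrightarrow> \<alpha> \<le> 1 \<longrightarrow> 0 < e \<longrightarrow> (\<exists>\<beta>. 0 < \<beta> \<and> \<beta> < \<alpha> \<and> U \<beta> \<le> U \<alpha> + e)) \<and>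
    (\<forall>\<alpha>. 0 < \<alpha> \<longrightarrow> \<alpha> \<le> 1 \<longrightarrow> l0 \<le> L \<alpha>) \<and>
    (\<forall>\<alpha>. 0 < \<alpha> \<longrightarrow> \<alpha> \<le> 1 \<longrightarrow> U \<alpha> \<le> u0) \<and>
    (\<forall>e>0. \<exists>\<alpha>. 0 < \<alpha> \<and> \<alpha> \<le> 1 \<and> L \<alpha> \<le> l0 + e) \<and>
    (\<forall>e>0. \<exists>\<alpha>. 0 < \<alpha> \<and> \<alpha> \<le> 1 \<and> u0 - e \<le> U \<alpha>)"

lemma goodLU_I:
  assumes "\<And>\<alpha> \<beta>. 0 < \<alpha> \<Longrightarrow> \<alpha> \<le> \<beta> \<Longrightarrow> \<beta> \<le> 1 \<Longrightarrow> L \<alpha> \<le> L \<beta>"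
    and "\<And>\<alpha> \<beta>. 0 < \<alpha> \<Longrightarrow> \<alpha> \<le> \<beta> \<Longrightarrow> \<beta> \<le> 1 \<Longrightarrow> U \<beta> \<le> U \<alpha>"
    and "\<And>\<alpha>. 0 < \<alpha> \<Longrightarrow> \<alpha> \<le> 1 \<Longrightarrow> L \<alpha> \<le> U \<alpha>"
    and "\<And>\<alpha> e. 0 < \<alpha> \<Longrightarrow> \<alpha> \<le> 1 \<Longrightarrow> 0 < e \<Longrightarrow> \<exists>\<beta>. 0 < \<beta> \<and> \<beta> < \<alpha> \<and> L \<alpha> - e \<le> L \<beta>"
    and "\<And>\<alpha> e. 0 < \<alpha> \<Longrightarrow> \<alpha> \<le> 1 \<Longrightarrow> 0 < e \<Longrightarrow> \<exists>\<beta>. 0 < \<beta> \<and> \<beta> < \<alpha> \<and> U \<beta> \<le> U \<alpha> + e"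
    and "\<And>\<alpha>. 0 < \<alpha> \<Longrightarrow> \<alpha> \<le> 1 \<Longrightarrow> l0 \<le> L \<alpha>"
    and "\<And>\<alpha>. 0 < \<alpha> \<Longrightarrow> \<alpha> \<le> 1 \<Longrightarrow> U \<alpha> \<le> u0"
    and "\<And>e. 0 < e \<Longrightarrow> \<exists>\<alpha>. 0 < \<alpha> \<and> \<alpha> \<le> 1 \<and> L \<alpha> \<le> l0 + e"
    and "\<And>e. 0 < e \<Longrightarrow> \<exists>\<alpha>. 0 < \<alpha> \<and> \<alpha> \<le> 1 \<and> u0 - e \<le> U \<alpha>"
  shows "goodLU L U l0 u0"
  unfolding goodLU_def using assms by blast

context fixes L U :: "real \<Rightarrow> real" and l0 u0 :: real assumes g: "goodLU L U l0 u0"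
begin
lemma gL_mono: "0 < \<alpha> \<Longrightarrow> \<alpha> \<le> \<beta> \<Longrightarrow> \<beta> \<le> 1 \<Longrightarrow> L \<alpha> \<le> L \<beta>"
  using g[unfolded goodLU_def, THEN conjunct1] by blast
lemma gU_mono: "0 < \<alpha> \<Longrightarrow> \<alpha> \<le> \<beta> \<Longrightarrow> \<beta> \<le> 1 \<Longrightarrow> U \<beta> \<le> U \<alpha>"
  using g[unfolded goodLU_def, THEN conjunct2, THEN conjunct1] by blast
lemma gLU: "0 < \<alpha> \<Longrightarrow> \<alpha> \<le> 1 \<Longrightarrow> L \<alpha> \<le> U \<alpha>"
  using g[unfolded goodLU_def, THEN conjunct2, THEN conjunct2, THEN conjunct1] by blast
lemma gL_lc: "0 < \<alpha> \<Longrightarrow> \<alpha> \<le> 1 \<Longrightarrow> 0 < e \<Longrightarrow> \<exists>\<beta>. 0 < \<beta> \<and> \<beta> < \<alpha> \<and> L \<alpha> - e \<le> L \<beta>"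
  using g[unfolded goodLU_def, THEN conjunct2, THEN conjunct2, THEN conjunct2, THEN conjunct1] by blast
lemma gU_lc: "0 < \<alpha> \<Longrightarrow> \<alpha> \<le> 1 \<Longrightarrow> 0 < e \<Longrightarrow> \<exists>\<beta>. 0 < \<beta> \<and> \<beta> < \<alpha> \<and> U \<beta> \<le> U \<alpha> + e"
  using g[unfolded goodLU_def, THEN conjunct2, THEN conjunct2, THEN conjunct2, THEN conjunct2, THEN conjunct1] by blast
lemma gL_bnd: "0 < \<alpha> \<Longrightarrow> \<alpha> \<le> 1 \<Longrightarrow> l0 \<le> L \<alpha>"
  using g[unfolded goodLU_def, THEN conjunct2, THEN conjunct2, THEN conjunct2, THEN conjunct2, THEN conjunct2, THEN conjunct1] by blast
lemma gU_bnd: "0 < \<alpha> \<Longrightarrow> \<alpha> \<le> 1 \<Longrightarrow> U \<alpha> \<le> u0"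
  using g[unfolded goodLU_def, THEN conjunct2, THEN conjunct2, THEN conjunct2, THEN conjunct2, THEN conjunct2, THEN conjunct2, THEN conjunct1] by blast
lemma gL_apx: "0 < e \<Longrightarrow> \<exists>\<alpha>. 0 < \<alpha> \<and> \<alpha> \<le> 1 \<and> L \<alpha> \<le> l0 + e"
  using g[unfolded goodLU_def, THEN conjunct2, THEN conjunct2, THEN conjunct2, THEN conjunct2, THEN conjunct2, THEN conjunct2, THEN conjunct2, THEN conjunct1] by blast
lemma gU_apx: "0 < e \<Longrightarrow> \<exists>\<alpha>. 0 < \<alpha> \<and> \<alpha> \<le> 1 \<and> u0 - e \<le> U \<alpha>"
  using g[unfolded goodLU_def, THEN conjunct2, THEN conjunct2, THEN conjunct2, THEN conjunct2, THEN conjunct2, THEN conjunct2, THEN conjunct2, THEN conjunct2] by blast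
end

definition fineF :: "fuzzy \<Rightarrow> bool" where
  "fineF u \<longleftrightarrow> goodLU (lower u) (upper u) (lower u 0) (upper u 0)"

lemma goodLU_cong:
  assumes g: "goodLU L U l0 u0" and e: "\<And>\<alpha>. 0 < \<alpha> \<Longrightarrow> \<alpha> \<le> 1 \<Longrightarrow> L' \<alpha> = L \<alpha> \<and> U' \<alpha> = U \<alpha>"
  shows "goodLU L' U' l0 u0"
proof (rule goodLU_I)
  fix \<alpha> \<beta> :: real assume a: "0 < \<alpha>" "\<alpha> \<le> \<beta>" "\<beta> \<le> 1"
  show "L' \<alpha> \<le> L' \<beta>" using gL_mono[OF g a] e[of \<alpha>] e[of \<beta>] a by simp
  show "U' \<beta> \<le> U' \<alpha>" using gU_mono[OF g a] e[of \<alpha>] e[of \<beta>] a by simp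
next
  fix \<alpha> :: real assume a: "0 < \<alpha>" "\<alpha> \<le> 1"
  show "L' \<alpha> \<le> U' \<alpha>" using gLU[OF g a] e[OF a] by simp
  show "l0 \<le> L' \<alpha>" using gL_bnd[OF g a] e[OF a] by simp
  show "U' \<alpha> \<le> u0" using gU_bnd[OF g a] e[OF a] by simp
next
  fix \<alpha> e' :: real assume a: "0 < \<alpha>" "\<alpha> \<le> 1" "0 < e'"
  obtain \<beta> where b: "0 < \<beta>" "\<beta> < \<alpha>" "L \<alpha> - e' \<le> L \<beta>" using gL_lc[OF g a] by blast
  show "\<exists>\<beta>. 0 < \<beta> \<and> \<beta> < \<alpha> \<and> L' \<alpha> - e' \<le> L' \<beta>"
    using b a e[of \<alpha>] e[of \<beta>] by (intro exI[of _ \<beta>]) simp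
next
  fix \<alpha> e' :: real assume a: "0 < \<alpha>" "\<alpha> \<le> 1" "0 < e'"
  obtain \<beta> where b: "0 < \<beta>" "\<beta> < \<alpha>" "U \<beta> \<le> U \<alpha> + e'" using gU_lc[OF g a] by blast
  show "\<exists>\<beta>. 0 < \<beta> \<and> \<beta> < \<alpha> \<and> U' \<beta> \<le> U' \<alpha> + e'"
    using b a e[of \<alpha>] e[of \<beta>] by (intro exI[of _ \<beta>]) simp
next
  fix e' :: real assume a: "0 < e'"
  obtain \<alpha> where b: "0 < \<alpha>" "\<alpha> \<le> 1" "L \<alpha> \<le> l0 + e'" using gL_apx[OF g a] by blast
  show "\<exists>\<alpha>. 0 < \<alpha> \<and> \<alpha> \<le> 1 \<and> L' \<alpha> \<le> l0 + e'" using b e[of \<alpha>] by (intro exI[of _ \<alpha>]) simp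
next
  fix e' :: real assume a: "0 < e'"
  obtain \<alpha> where b: "0 < \<alpha>" "\<alpha> \<le> 1" "u0 - e' \<le> U \<alpha>" using gU_apx[OF g a] by blast
  show "\<exists>\<alpha>. 0 < \<alpha> \<and> \<alpha> \<le> 1 \<and> u0 - e' \<le> U' \<alpha>" using b e[of \<alpha>] by (intro exI[of _ \<alpha>]) simp
qed

lemma goodLU_add:
  assumes g1: "goodLU L1 U1 a1 b1" and g2: "goodLU L2 U2 a2 b2"
  shows "goodLU (\<lambda>\<alpha>. L1 \<alpha> + L2 \<alpha>) (\<lambda>\<alpha>. U1 \<alpha> + U2 \<alpha>) (a1 + a2) (b1 + b2)"
proof (rule goodLU_I)
  fix \<alpha> \<beta> :: real assume a: "0 < \<alpha>" "\<alpha> \<le> \<beta>" "\<beta> \<le> 1"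
  show "L1 \<alpha> + L2 \<alpha> \<le> L1 \<beta> + L2 \<beta>" using gL_mono[OF g1 a] gL_mono[OF g2 a] by simp
  show "U1 \<beta> + U2 \<beta> \<le> U1 \<alpha> + U2 \<alpha>" using gU_mono[OF g1 a] gU_mono[OF g2 a] by simp
next
  fix \<alpha> :: real assume a: "0 < \<alpha>" "\<alpha> \<le> 1"
  show "L1 \<alpha> + L2 \<alpha> \<le> U1 \<alpha> + U2 \<alpha>" using gLU[OF g1 a] gLU[OF g2 a] by simp
  show "a1 + a2 \<le> L1 \<alpha> + L2 \<alpha>" using gL_bnd[OF g1 a] gL_bnd[OF g2 a] by simp
  show "U1 \<alpha> + U2 \<alpha> \<le> b1 + b2" using gU_bnd[OF g1 a] gU_bnd[OF g2 a] by simp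
next
  fix \<alpha> e :: real assume a: "0 < \<alpha>" "\<alpha> \<le> 1" "0 < e"
  have e2: "0 < e/2" using a by simp
  obtain \<beta>1 where b1: "0 < \<beta>1" "\<beta>1 < \<alpha>" "L1 \<alpha> - e/2 \<le> L1 \<beta>1" using gL_lc[OF g1 a(1,2) e2] by blast
  obtain \<beta>2 where b2: "0 < \<beta>2" "\<beta>2 < \<alpha>" "L2 \<alpha> - e/2 \<le> L2 \<beta>2" using gL_lc[OF g2 a(1,2) e2] by blast
  have "L1 \<beta>1 \<le> L1 (max \<beta>1 \<beta>2)" using b1 b2 a by (intro gL_mono[OF g1]) auto
  moreover have "L2 \<beta>2 \<le> L2 (max \<beta>1 \<beta>2)" using b1 b2 a by (intro gL_mono[OF g2]) auto
  ultimately show "\<exists>\<beta>. 0 < \<beta> \<and> \<beta> < \<alpha> \<and> L1 \<alpha> + L2 \<alpha> - e \<le> L1 \<beta> + L2 \<beta>" using b1 b2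
    by (intro exI[of _ "max \<beta>1 \<beta>2"]) auto
next
  fix \<alpha> e :: real assume a: "0 < \<alpha>" "\<alpha> \<le> 1" "0 < e"
  have e2: "0 < e/2" using a by simp
  obtain \<beta>1 where b1: "0 < \<beta>1" "\<beta>1 < \<alpha>" "U1 \<beta>1 \<le> U1 \<alpha> + e/2" using gU_lc[OF g1 a(1,2) e2] by blast
  obtain \<beta>2 where b2: "0 < \<beta>2" "\<beta>2 < \<alpha>" "U2 \<beta>2 \<le> U2 \<alpha> + e/2" using gU_lc[OF g2 a(1,2) e2] by blast
  have "U1 (max \<beta>1 \<beta>2) \<le> U1 \<beta>1" using b1 b2 a by (intro gU_mono[OF g1]) auto
  moreover have "U2 (max \<beta>1 \<beta>2) \<le> U2 \<beta>2" using b1 b2 a by (intro gU_mono[OF g2]) auto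
  ultimately show "\<exists>\<beta>. 0 < \<beta> \<and> \<beta> < \<alpha> \<and> U1 \<beta> + U2 \<beta> \<le> U1 \<alpha> + U2 \<alpha> + e" using b1 b2
    by (intro exI[of _ "max \<beta>1 \<beta>2"]) auto
next
  fix e :: real assume a: "0 < e"
  have e2: "0 < e/2" using a by simp
  obtain \<alpha>1 where c1: "0 < \<alpha>1" "\<alpha>1 \<le> 1" "L1 \<alpha>1 \<le> a1 + e/2" using gL_apx[OF g1 e2] by blast
  obtain \<alpha>2 where c2: "0 < \<alpha>2" "\<alpha>2 \<le> 1" "L2 \<alpha>2 \<le> a2 + e/2" using gL_apx[OF g2 e2] by blast
  have "L1 (min \<alpha>1 \<alpha>2) \<le> L1 \<alpha>1" using c1 c2 by (intro gL_mono[OF g1]) auto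
  moreover have "L2 (min \<alpha>1 \<alpha>2) \<le> L2 \<alpha>2" using c1 c2 by (intro gL_mono[OF g2]) auto
  ultimately show "\<exists>\<alpha>. 0 < \<alpha> \<and> \<alpha> \<le> 1 \<and> L1 \<alpha> + L2 \<alpha> \<le> a1 + a2 + e" using c1 c2
    by (intro exI[of _ "min \<alpha>1 \<alpha>2"]) auto
next
  fix e :: real assume a: "0 < e"
  have e2: "0 < e/2" using a by simp
  obtain \<alpha>1 where c1: "0 < \<alpha>1" "\<alpha>1 \<le> 1" "b1 - e/2 \<le> U1 \<alpha>1" using gU_apx[OF g1 e2] by blast
  obtain \<alpha>2 where c2: "0 < \<alpha>2" "\<alpha>2 \<le> 1" "b2 - e/2 \<le> U2 \<alpha>2" using gU_apx[OF g2 e2] by blast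
  have "U1 \<alpha>1 \<le> U1 (min \<alpha>1 \<alpha>2)" using c1 c2 by (intro gU_mono[OF g1]) auto
  moreover have "U2 \<alpha>2 \<le> U2 (min \<alpha>1 \<alpha>2)" using c1 c2 by (intro gU_mono[OF g2]) auto
  ultimately show "\<exists>\<alpha>. 0 < \<alpha> \<and> \<alpha> \<le> 1 \<and> b1 + b2 - e \<le> U1 \<alpha> + U2 \<alpha>" using c1 c2
    by (intro exI[of _ "min \<alpha>1 \<alpha>2"]) auto
qed

lemma goodLU_scale:
  assumes g: "goodLU L U l0 u0" and k: "k \<ge> 0"
  shows "goodLU (\<lambda>\<alpha>. k * L \<alpha>) (\<lambda>\<alpha>. k * U \<alpha>) (k * l0) (k * u0)"
proof (cases "k = 0")
  case True
  show ?thesis unfolding True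
  proof (rule goodLU_I)
    fix \<alpha> e :: real assume a: "0 < \<alpha>" "\<alpha> \<le> 1" "0 < e"
    show "\<exists>\<beta>. 0 < \<beta> \<and> \<beta> < \<alpha> \<and> 0 * L \<alpha> - e \<le> 0 * L \<beta>"
      using a by (intro exI[of _ "\<alpha>/2"]) simp
    show "\<exists>\<beta>. 0 < \<beta> \<and> \<beta> < \<alpha> \<and> 0 * U \<beta> \<le> 0 * U \<alpha> + e"
      using a by (intro exI[of _ "\<alpha>/2"]) simp
  qed (auto intro: exI[of _ "1::real"])
next
  case False
  hence kp: "k > 0" using k by simp
  show ?thesis
  proof (rule goodLU_I)
    fix \<alpha> \<beta> :: real assume a: "0 < \<alpha>" "\<alpha> \<le> \<beta>" "\<beta> \<le> 1"
    show "k * L \<alpha> \<le> k * L \<beta>" using gL_mono[OF g a] k by (rule mult_left_mono)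
    show "k * U \<beta> \<le> k * U \<alpha>" using gU_mono[OF g a] k by (rule mult_left_mono)
  next
    fix \<alpha> :: real assume a: "0 < \<alpha>" "\<alpha> \<le> 1"
    show "k * L \<alpha> \<le> k * U \<alpha>" using gLU[OF g a] k by (rule mult_left_mono)
    show "k * l0 \<le> k * L \<alpha>" using gL_bnd[OF g a] k by (rule mult_left_mono)
    show "k * U \<alpha> \<le> k * u0" using gU_bnd[OF g a] k by (rule mult_left_mono)
  next
    fix \<alpha> e :: real assume a: "0 < \<alpha>" "\<alpha> \<le> 1" "0 < e"
    have ek: "0 < e/k" using a kp by simp
    obtain \<beta> where b: "0 < \<beta>" "\<beta> < \<alpha>" "L \<alpha> - e/k \<le> L \<beta>" using gL_lc[OF g a(1,2) ek] by blast
    have "k * (L \<alpha> - e/k) \<le> k * L \<beta>" using b k by (simp add: mult_left_mono)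
    hence "k * L \<alpha> - e \<le> k * L \<beta>" using kp by (simp add: right_diff_distrib)
    thus "\<exists>\<beta>. 0 < \<beta> \<and> \<beta> < \<alpha> \<and> k * L \<alpha> - e \<le> k * L \<beta>" using b by blast
  next
    fix \<alpha> e :: real assume a: "0 < \<alpha>" "\<alpha> \<le> 1" "0 < e"
    have ek: "0 < e/k" using a kp by simp
    obtain \<beta> where b: "0 < \<beta>" "\<beta> < \<alpha>" "U \<beta> \<le> U \<alpha> + e/k" using gU_lc[OF g a(1,2) ek] by blast
    have "k * U \<beta> \<le> k * (U \<alpha> + e/k)" using b k by (simp add: mult_left_mono)
    hence "k * U \<beta> \<le> k * U \<alpha> + e" using kp by (simp add: distrib_left)
    thus "\<exists>\<beta>. 0 < \<beta> \<and> \<beta> < \<alpha> \<and> k * U \<beta> \<le> k * U \<alpha> + e" using b by blast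
  next
    fix e :: real assume a: "0 < e"
    have ek: "0 < e/k" using a kp by simp
    obtain \<alpha> where b: "0 < \<alpha>" "\<alpha> \<le> 1" "L \<alpha> \<le> l0 + e/k" using gL_apx[OF g ek] by blast
    have "k * L \<alpha> \<le> k * (l0 + e/k)" using b k by (simp add: mult_left_mono)
    hence "k * L \<alpha> \<le> k * l0 + e" using kp by (simp add: distrib_left)
    thus "\<exists>\<alpha>. 0 < \<alpha> \<and> \<alpha> \<le> 1 \<and> k * L \<alpha> \<le> k * l0 + e" using b by blast
  next
    fix e :: real assume a: "0 < e"
    have ek: "0 < e/k" using a kp by simp
    obtain \<alpha> where b: "0 < \<alpha>" "\<alpha> \<le> 1" "u0 - e/k \<le> U \<alpha>" using gU_apx[OF g ek] by blast
    have "k * (u0 - e/k) \<le> k * U \<alpha>" using b k by (simp add: mult_left_mono)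
    hence "k * u0 - e \<le> k * U \<alpha>" using kp by (simp add: right_diff_distrib)
    thus "\<exists>\<alpha>. 0 < \<alpha> \<and> \<alpha> \<le> 1 \<and> k * u0 - e \<le> k * U \<alpha>" using b by blast
  qed
qed




lemma of_levels_char:
  assumes g: "goodLU L U l0 u0"
  shows "\<And>\<alpha>. 0 < \<alpha> \<Longrightarrow> \<alpha> \<le> 1 \<Longrightarrow> lower (of_levels L U) \<alpha> = L \<alpha> \<and> upper (of_levels L U) \<alpha> = U \<alpha>"
    and "lower (of_levels L U) 0 = l0 \<and> upper (of_levels L U) 0 = u0"
proof -
  define A where "A t = {\<alpha>. 0 < \<alpha> \<and> \<alpha> \<le> 1 \<and> L \<alpha> \<le> t \<and> t \<le> U \<alpha>}" for t
  define F where "F = of_levels L U"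
  have F: "F t = Sup ({0} \<union> A t)" for t by (simp add: F_def of_levels_def A_def)
  have bdd: "bdd_above ({0} \<union> A t)" for t
    unfolding bdd_above_def A_def by (intro exI[of _ 1]) auto
  have key: "\<alpha> \<le> F t \<longleftrightarrow> L \<alpha> \<le> t \<and> t \<le> U \<alpha>" if a: "0 < \<alpha>" "\<alpha> \<le> 1" for \<alpha> t
  proof
    assume "L \<alpha> \<le> t \<and> t \<le> U \<alpha>"
    hence "\<alpha> \<in> {0} \<union> A t" using a by (auto simp: A_def)
    thus "\<alpha> \<le> F t" unfolding F by (rule cSup_upper[OF _ bdd])
  next
    assume h: "\<alpha> \<le> F t"
    have below: "L \<beta> \<le> t \<and> t \<le> U \<beta>" if b: "0 < \<beta>" "\<beta> < \<alpha>" for \<beta>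
    proof (rule ccontr)
      assume nb: "\<not> (L \<beta> \<le> t \<and> t \<le> U \<beta>)"
      have "F t \<le> \<beta>" unfolding F
      proof (rule cSup_least)
        show "{0} \<union> A t \<noteq> {}" by simp
        fix \<gamma> assume \<gamma>: "\<gamma> \<in> {0} \<union> A t"
        show "\<gamma> \<le> \<beta>"
        proof (rule ccontr)
          assume "\<not> \<gamma> \<le> \<beta>"
          hence gb: "\<beta> < \<gamma>" by simp
          hence "\<gamma> \<in> A t" using \<gamma> b by auto
          hence g1: "\<gamma> \<le> 1" "L \<gamma> \<le> t" "t \<le> U \<gamma>" by (auto simp: A_def)
          have "L \<beta> \<le> L \<gamma>" by (rule gL_mono[OF g b(1) less_imp_le[OF gb] g1(1)])
          moreover have "U \<gamma> \<le> U \<beta>" by (rule gU_mono[OF g b(1) less_imp_le[OF gb] g1(1)])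
          ultimately show False using nb g1 by linarith
        qed
      qed
      thus False using h b by simp
    qed
    show "L \<alpha> \<le> t \<and> t \<le> U \<alpha>"
    proof
      show "L \<alpha> \<le> t"
      proof (rule field_le_epsilon)
        fix e :: real assume e: "0 < e"
        obtain \<beta> where b: "0 < \<beta>" "\<beta> < \<alpha>" "L \<alpha> - e \<le> L \<beta>" using gL_lc[OF g a e] by blast
        have "L \<beta> \<le> t" using below[OF b(1,2)] by simp
        thus "L \<alpha> \<le> t + e" using b(3) by linarith
      qed
      show "t \<le> U \<alpha>"
      proof (rule field_le_epsilon)
        fix e :: real assume e: "0 < e"
        obtain \<beta> where b: "0 < \<beta>" "\<beta> < \<alpha>" "U \<beta> \<le> U \<alpha> + e" using gU_lc[OF g a e] by blast
        have "t \<le> U \<beta>" using below[OF b(1,2)] by simp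
        thus "t \<le> U \<alpha> + e" using b(3) by linarith
      qed
    qed
  qed
  show "lower (of_levels L U) \<alpha> = L \<alpha> \<and> upper (of_levels L U) \<alpha> = U \<alpha>" if a: "0 < \<alpha>" "\<alpha> \<le> 1" for \<alpha>
  proof -
    have "level F \<alpha> = {t. \<alpha> \<le> F t}" using a by (simp add: level_def)
    also have "\<dots> = {L \<alpha>..U \<alpha>}"
    proof (rule set_eqI)
      fix t show "t \<in> {t. \<alpha> \<le> F t} \<longleftrightarrow> t \<in> {L \<alpha>..U \<alpha>}"
        using key[OF a, of t] by simp
    qed
    finally have "level F \<alpha> = {L \<alpha>..U \<alpha>}" .
    thus ?thesis using gLU[OF g a] by (simp add: lower_def upper_def F_def)
  qed
  have pos: "0 < F t \<longleftrightarrow> (\<exists>\<alpha>. 0 < \<alpha> \<and> \<alpha> \<le> 1 \<and> L \<alpha> \<le> t \<and> t \<le> U \<alpha>)" for t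
  proof
    assume "0 < F t"
    show "\<exists>\<alpha>. 0 < \<alpha> \<and> \<alpha> \<le> 1 \<and> L \<alpha> \<le> t \<and> t \<le> U \<alpha>"
    proof (rule ccontr)
      assume "\<not> ?thesis"
      hence "A t = {}" by (auto simp: A_def)
      hence "F t = 0" unfolding F by simp
      thus False using \<open>0 < F t\<close> by simp
    qed
  next
    assume "\<exists>\<alpha>. 0 < \<alpha> \<and> \<alpha> \<le> 1 \<and> L \<alpha> \<le> t \<and> t \<le> U \<alpha>"
    then obtain \<alpha> where a: "0 < \<alpha>" "\<alpha> \<le> 1" "L \<alpha> \<le> t" "t \<le> U \<alpha>" by blast
    hence "\<alpha> \<le> F t" using key[OF a(1,2)] by simp
    thus "0 < F t" using a by simp
  qed
  define P where "P = {t. \<exists>\<alpha>. 0 < \<alpha> \<and> \<alpha> \<le> 1 \<and> L \<alpha> \<le> t \<and> t \<le> U \<alpha>}"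
  have P: "{t. 0 < F t} = P" using pos by (auto simp: P_def)
  have cl: "closure P = {l0..u0}"
  proof
    have "P \<subseteq> {l0..u0}"
    proof
      fix t assume "t \<in> P"
      then obtain \<alpha> where a: "0 < \<alpha>" "\<alpha> \<le> 1" "L \<alpha> \<le> t" "t \<le> U \<alpha>" by (auto simp: P_def)
      thus "t \<in> {l0..u0}" using gL_bnd[OF g a(1,2)] gU_bnd[OF g a(1,2)] by auto
    qed
    thus "closure P \<subseteq> {l0..u0}" by (rule closure_minimal) simp
  next
    show "{l0..u0} \<subseteq> closure P"
    proof
      fix t assume t: "t \<in> {l0..u0}"
      show "t \<in> closure P" unfolding closure_approachable
      proof (intro allI impI)
        fix e :: real assume e: "0 < e"
        have e2: "0 < e/2" using e by simp
        obtain \<alpha>1 where c1: "0 < \<alpha>1" "\<alpha>1 \<le> 1" "L \<alpha>1 \<le> l0 + e/2" using gL_apx[OF g e2] by blast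
        obtain \<alpha>2 where c2: "0 < \<alpha>2" "\<alpha>2 \<le> 1" "u0 - e/2 \<le> U \<alpha>2" using gU_apx[OF g e2] by blast
        define \<alpha> where "\<alpha> = min \<alpha>1 \<alpha>2"
        have a: "0 < \<alpha>" "\<alpha> \<le> 1" using c1 c2 by (auto simp: \<alpha>_def)
        have "L \<alpha> \<le> L \<alpha>1" using c1 c2 by (intro gL_mono[OF g]) (auto simp: \<alpha>_def)
        hence La: "L \<alpha> \<le> l0 + e/2" using c1 by simp
        have "U \<alpha>2 \<le> U \<alpha>" using c1 c2 by (intro gU_mono[OF g]) (auto simp: \<alpha>_def)
        hence Ua: "u0 - e/2 \<le> U \<alpha>" using c2 by simp
        have LU: "L \<alpha> \<le> U \<alpha>" using gLU[OF g a] .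
        define y where "y = max (L \<alpha>) (min t (U \<alpha>))"
        have "L \<alpha> \<le> y" "y \<le> U \<alpha>" using LU by (simp_all add: y_def)
        hence "y \<in> P" unfolding P_def using a by blast
        moreover have "dist y t < e"
        proof -
          have tb: "l0 \<le> t" "t \<le> u0" using t by auto
          have "\<bar>y - t\<bar> \<le> e/2"
          proof (cases "t < L \<alpha>")
            case True
            hence "y = L \<alpha>" unfolding y_def by simp
            thus ?thesis using True La tb by simp
          next
            case False
            show ?thesis
            proof (cases "U \<alpha> < t")
              case True
              hence "y = U \<alpha>" unfolding y_def using LU by simp
              thus ?thesis using True Ua tb by simp
            next
              case False
              hence "y = t" unfolding y_def using \<open>\<not> t < L \<alpha>\<close> by simp
              thus ?thesis using e by simp
            qed
          qed
          thus ?thesis using e by (simp add: dist_real_def)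
        qed
        ultimately show "\<exists>y\<in>P. dist y t < e" by blast
      qed
    qed
  qed
  have l0u0: "l0 \<le> u0" using gL_bnd[OF g, of 1] gU_bnd[OF g, of 1] gLU[OF g, of 1] by simp
  have "level F 0 = {l0..u0}" unfolding level_def using P cl by simp
  thus "lower (of_levels L U) 0 = l0 \<and> upper (of_levels L U) 0 = u0"
    using l0u0 by (simp add: lower_def upper_def F_def)
qed

lemma fineF_of_levels:
  assumes g: "goodLU L U l0 u0"
  shows "fineF (of_levels L U) \<and> lower (of_levels L U) 0 = l0 \<and> upper (of_levels L U) 0 = u0"
proof -
  have e: "lower (of_levels L U) 0 = l0 \<and> upper (of_levels L U) 0 = u0" by (rule of_levels_char(2)[OF g])
  have "goodLU (lower (of_levels L U)) (upper (of_levels L U)) l0 u0"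
    by (rule goodLU_cong[OF g]) (rule of_levels_char(1)[OF g])
  thus ?thesis using e by (simp add: fineF_def)
qed

lemma fineF_fadd:
  assumes "fineF u" "fineF v"
  shows "fineF (fadd u v) \<and> lower (fadd u v) 0 = lower u 0 + lower v 0 \<and> upper (fadd u v) 0 = upper u 0 + upper v 0"
  unfolding fadd_def
  by (rule fineF_of_levels[OF goodLU_add[OF assms[unfolded fineF_def]]])

lemma fineF_fscale:
  assumes "fineF u" "k \<ge> 0"
  shows "fineF (fscale k u) \<and> lower (fscale k u) 0 = k * lower u 0 \<and> upper (fscale k u) 0 = k * upper u 0"
proof -
  have "fscale k u = of_levels (\<lambda>\<alpha>. k * lower u \<alpha>) (\<lambda>\<alpha>. k * upper u \<alpha>)"
    using assms(2) by (simp add: fscale_def)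
  thus ?thesis using fineF_of_levels[OF goodLU_scale[OF assms(1)[unfolded fineF_def] assms(2)]] by simp
qed

lemma fineF_fsum:
  assumes "\<And>k. k \<le> n \<Longrightarrow> fineF (f k)"
  shows "fineF (fsum_upto f n) \<and> lower (fsum_upto f n) 0 = (\<Sum>k\<le>n. lower (f k) 0)
      \<and> upper (fsum_upto f n) 0 = (\<Sum>k\<le>n. upper (f k) 0)"
  using assms
proof (induction n)
  case 0 then show ?case by simp
next
  case (Suc n)
  have IH: "fineF (fsum_upto f n) \<and> lower (fsum_upto f n) 0 = (\<Sum>k\<le>n. lower (f k) 0)
      \<and> upper (fsum_upto f n) 0 = (\<Sum>k\<le>n. upper (f k) 0)" using Suc by simp
  have "fineF (f (Suc n))" using Suc.prems by simp
  from fineF_fadd[OF IH[THEN conjunct1] this] IH show ?case by simp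
qed




lemma quasi_between:
  fixes u :: "real \<Rightarrow> real" and x y t \<beta> :: real
  assumes conv: "\<forall>x y l. 0 \<le> l \<and> l \<le> 1 \<longrightarrow> min (u x) (u y) \<le> u (l * x + (1 - l) * y)"
    and hx: "\<beta> \<le> u x" and hy: "\<beta> \<le> u y" and xt: "x \<le> t" and ty: "t \<le> y"
  shows "\<beta> \<le> u t"
proof (cases "x = y")
  case True
  have "t \<le> x" using ty True by simp
  hence "t = x" using xt by (rule order_antisym)
  thus ?thesis using hx by simp
next
  case False
  hence xy: "x < y" using xt ty by simp
  define l where "l = (y - t) / (y - x)"
  have l0: "0 \<le> l" and l1: "l \<le> 1" using xy xt ty by (auto simp: l_def field_simps)
  have e: "l * (y - x) = y - t" using xy by (simp add: l_def)
  have "l * x + (1 - l) * y = y - l * (y - x)" by (simp add: algebra_simps)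
  hence "l * x + (1 - l) * y = t" using e by simp
  hence "min (u x) (u y) \<le> u t" using conv[rule_format, of l x y] l0 l1 by simp
  thus ?thesis using hx hy by simp
qed

lemma fuzzy_fineF:
  assumes fz: "fuzzy_number u"
  shows "fineF u"
proof -
  note d = fz[unfolded fuzzy_number_def]
  have rng: "\<And>t. 0 \<le> u t \<and> u t \<le> 1" using d[THEN conjunct1] by blast
  have norm: "\<exists>t. u t = 1" using d[THEN conjunct2, THEN conjunct1] .
  have conv: "\<forall>x y l. 0 \<le> l \<and> l \<le> 1 \<longrightarrow> min (u x) (u y) \<le> u (l * x + (1 - l) * y)"
    using d[THEN conjunct2, THEN conjunct2, THEN conjunct1] .
  have usc: "\<And>x e. 0 < e \<Longrightarrow> \<forall>\<^sub>F y in at x. u y < u x + e"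
    using d[THEN conjunct2, THEN conjunct2, THEN conjunct2, THEN conjunct1] by blast
  have cpt: "compact (closure {t. 0 < u t})" using d[THEN conjunct2, THEN conjunct2, THEN conjunct2, THEN conjunct2] .
  define K where "K = closure {t. 0 < u t}"
  define Lev where "Lev \<alpha> = {t. \<alpha> \<le> u t}" for \<alpha>
  obtain t0 where t0: "u t0 = 1" using norm by blast
  have Kb: "bounded K" using compact_imp_bounded[OF cpt] by (simp add: K_def)
  have Kc: "closed K" by (simp add: K_def)
  have t0K: "t0 \<in> K" unfolding K_def using t0 closure_subset by fastforce
  have Kne: "K \<noteq> {}" using t0K by auto
  have LevK: "Lev \<alpha> \<subseteq> K" if "0 < \<alpha>" for \<alpha>
  proof
    fix t assume "t \<in> Lev \<alpha>"
    hence "0 < u t" using that by (simp add: Lev_def)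
    thus "t \<in> K" unfolding K_def using closure_subset by fastforce
  qed
  have Levne: "t0 \<in> Lev \<alpha>" if "\<alpha> \<le> 1" for \<alpha> using that t0 by (simp add: Lev_def)
  have Levcl: "closed (Lev \<alpha>)" for \<alpha>
  proof -
    have "- Lev \<alpha> = {t. u t < \<alpha>}" by (auto simp: Lev_def)
    moreover have "open {t. u t < \<alpha>}"
    proof (rule open_subopen[THEN iffD2], rule ballI)
      fix x assume "x \<in> {t. u t < \<alpha>}"
      hence x: "u x < \<alpha>" by simp
      have "\<forall>\<^sub>F y in at x. u y < u x + (\<alpha> - u x)" using usc[of "\<alpha> - u x" x] x by simp
      hence "\<forall>\<^sub>F y in at x. u y < \<alpha>" by simp
      hence "\<forall>\<^sub>F y in nhds x. u y < \<alpha>" using x by (simp add: eventually_nhds_conv_at)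
      then obtain T where "open T" "x \<in> T" "\<forall>y\<in>T. u y < \<alpha>" unfolding eventually_nhds by blast
      thus "\<exists>T. open T \<and> x \<in> T \<and> T \<subseteq> {t. u t < \<alpha>}" by blast
    qed
    ultimately show ?thesis by (metis closed_def double_complement)
  qed
  have lowE: "lower u \<alpha> = Inf (Lev \<alpha>)" "upper u \<alpha> = Sup (Lev \<alpha>)" if "0 < \<alpha>" for \<alpha>
    using that by (simp_all add: lower_def upper_def level_def Lev_def)
  have low0: "lower u 0 = Inf K" "upper u 0 = Sup K"
    by (simp_all add: lower_def upper_def level_def K_def)
  have Kbb: "bdd_below K" "bdd_above K" using Kb by (simp_all add: bounded_imp_bdd_below bounded_imp_bdd_above)
  have Levb: "bdd_below (Lev \<alpha>)" "bdd_above (Lev \<alpha>)" if "0 < \<alpha>" for \<alpha>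
    using bdd_below_mono[OF Kbb(1) LevK[OF that]] bdd_above_mono[OF Kbb(2) LevK[OF that]] by simp_all
  have LevNE: "Lev \<alpha> \<noteq> {}" if "\<alpha> \<le> 1" for \<alpha> using Levne[OF that] by auto
  have Lin: "lower u \<alpha> \<in> Lev \<alpha>" "upper u \<alpha> \<in> Lev \<alpha>" if "0 < \<alpha>" "\<alpha> \<le> 1" for \<alpha>
    using lowE[OF that(1)] closed_contains_Inf[OF LevNE[OF that(2)] Levb(1)[OF that(1)] Levcl]
      closed_contains_Sup[OF LevNE[OF that(2)] Levb(2)[OF that(1)] Levcl] by simp_all
  have Llow: "lower u \<alpha> \<le> t" if "0 < \<alpha>" "t \<in> Lev \<alpha>" for \<alpha> t
    using lowE(1)[OF that(1)] cInf_lower[OF that(2) Levb(1)[OF that(1)]] by simp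
  have Uup: "t \<le> upper u \<alpha>" if "0 < \<alpha>" "t \<in> Lev \<alpha>" for \<alpha> t
    using lowE(2)[OF that(1)] cSup_upper[OF that(2) Levb(2)[OF that(1)]] by simp
  have Linv: "\<alpha> \<le> u (lower u \<alpha>)" "\<alpha> \<le> u (upper u \<alpha>)" if "0 < \<alpha>" "\<alpha> \<le> 1" for \<alpha>
    using Lin[OF that] by (simp_all add: Lev_def)
  show ?thesis unfolding fineF_def
  proof (rule goodLU_I)
    fix \<alpha> \<beta> :: real assume a: "0 < \<alpha>" "\<alpha> \<le> \<beta>" "\<beta> \<le> 1"
    have sub: "Lev \<beta> \<subseteq> Lev \<alpha>" using a by (auto simp: Lev_def)
    have ne: "Lev \<beta> \<noteq> {}" using LevNE a by simp
    have b0: "0 < \<beta>" using a by simp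
    show "lower u \<alpha> \<le> lower u \<beta>" unfolding lowE[OF a(1)] lowE[OF b0]
      by (rule cInf_superset_mono[OF ne Levb(1)[OF a(1)] sub])
    show "upper u \<beta> \<le> upper u \<alpha>" unfolding lowE[OF a(1)] lowE[OF b0]
      by (rule cSup_subset_mono[OF ne Levb(2)[OF a(1)] sub])
  next
    fix \<alpha> :: real assume a: "0 < \<alpha>" "\<alpha> \<le> 1"
    show "lower u \<alpha> \<le> upper u \<alpha>" unfolding lowE[OF a(1)]
      by (rule cInf_le_cSup[OF LevNE[OF a(2)] Levb(2)[OF a(1)] Levb(1)[OF a(1)]])
    show "lower u 0 \<le> lower u \<alpha>" unfolding lowE[OF a(1)] low0
      by (rule cInf_superset_mono[OF LevNE[OF a(2)] Kbb(1) LevK[OF a(1)]])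
    show "upper u \<alpha> \<le> upper u 0" unfolding lowE[OF a(1)] low0
      by (rule cSup_subset_mono[OF LevNE[OF a(2)] Kbb(2) LevK[OF a(1)]])
  next
    fix \<alpha> e :: real assume a: "0 < \<alpha>" "\<alpha> \<le> 1" "0 < e"
    show "\<exists>\<beta>. 0 < \<beta> \<and> \<beta> < \<alpha> \<and> lower u \<alpha> - e \<le> lower u \<beta>"
    proof (rule ccontr)
      assume H: "\<not> ?thesis"
      define t where "t = lower u \<alpha> - e"
      have lt: "lower u \<beta> < t" if "0 < \<beta>" "\<beta> < \<alpha>" for \<beta> using H that by (auto simp: t_def)
      have "\<alpha> \<le> u t"
      proof (rule ccontr)
        assume "\<not> \<alpha> \<le> u t"
        hence ut: "u t < \<alpha>" by simp
        define \<beta> where "\<beta> = (u t + \<alpha>) / 2"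
        have b: "0 < \<beta>" "\<beta> < \<alpha>" "u t < \<beta>" using ut rng[of t] a by (auto simp: \<beta>_def)
        have b1: "\<beta> \<le> 1" using b a by simp
        have "\<beta> \<le> u (lower u \<beta>)" using Linv(1)[OF b(1) b1] .
        moreover have "\<beta> \<le> u (lower u \<alpha>)" using Linv(1)[OF a(1,2)] b by simp
        moreover have "lower u \<beta> \<le> t" using lt[OF b(1,2)] by simp
        moreover have "t \<le> lower u \<alpha>" using a by (simp add: t_def)
        ultimately have "\<beta> \<le> u t" by (rule quasi_between[OF conv])
        thus False using b by simp
      qed
      hence "lower u \<alpha> \<le> t" using Llow[OF a(1)] by (simp add: Lev_def)
      thus False using a by (simp add: t_def)
    qed
  next
    fix \<alpha> e :: real assume a: "0 < \<alpha>" "\<alpha> \<le> 1" "0 < e"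
    show "\<exists>\<beta>. 0 < \<beta> \<and> \<beta> < \<alpha> \<and> upper u \<beta> \<le> upper u \<alpha> + e"
    proof (rule ccontr)
      assume H: "\<not> ?thesis"
      define t where "t = upper u \<alpha> + e"
      have lt: "t < upper u \<beta>" if "0 < \<beta>" "\<beta> < \<alpha>" for \<beta> using H that by (auto simp: t_def)
      have "\<alpha> \<le> u t"
      proof (rule ccontr)
        assume "\<not> \<alpha> \<le> u t"
        hence ut: "u t < \<alpha>" by simp
        define \<beta> where "\<beta> = (u t + \<alpha>) / 2"
        have b: "0 < \<beta>" "\<beta> < \<alpha>" "u t < \<beta>" using ut rng[of t] a by (auto simp: \<beta>_def)
        have b1: "\<beta> \<le> 1" using b a by simp
        have "\<beta> \<le> u (upper u \<alpha>)" using Linv(2)[OF a(1,2)] b by simp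
        moreover have "\<beta> \<le> u (upper u \<beta>)" using Linv(2)[OF b(1) b1] .
        moreover have "upper u \<alpha> \<le> t" using a by (simp add: t_def)
        moreover have "t \<le> upper u \<beta>" using lt[OF b(1,2)] by simp
        ultimately have "\<beta> \<le> u t" by (rule quasi_between[OF conv])
        thus False using b by simp
      qed
      hence "t \<le> upper u \<alpha>" using Uup[OF a(1)] by (simp add: Lev_def)
      thus False using a by (simp add: t_def)
    qed
  next
    fix e :: real assume e: "0 < e"
    have "Inf K \<in> K" by (rule closed_contains_Inf[OF Kne Kbb(1) Kc])
    hence "Inf K \<in> closure {t. 0 < u t}" by (simp add: K_def)
    from closure_approachable[THEN iffD1, OF this, rule_format, OF e]
    obtain y where y: "0 < u y" "dist y (Inf K) < e" by blast
    have a: "0 < u y" "u y \<le> 1" using y rng by auto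
    have "lower u (u y) \<le> y" using Llow[OF a(1)] by (simp add: Lev_def)
    hence "lower u (u y) \<le> lower u 0 + e" using y(2) low0 by (simp add: dist_real_def abs_less_iff)
    thus "\<exists>\<alpha>. 0 < \<alpha> \<and> \<alpha> \<le> 1 \<and> lower u \<alpha> \<le> lower u 0 + e" using a by blast
  next
    fix e :: real assume e: "0 < e"
    have "Sup K \<in> K" by (rule closed_contains_Sup[OF Kne Kbb(2) Kc])
    hence "Sup K \<in> closure {t. 0 < u t}" by (simp add: K_def)
    from closure_approachable[THEN iffD1, OF this, rule_format, OF e]
    obtain y where y: "0 < u y" "dist y (Sup K) < e" by blast
    have a: "0 < u y" "u y \<le> 1" using y rng by auto
    have "y \<le> upper u (u y)" using Uup[OF a(1)] by (simp add: Lev_def)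
    hence "upper u 0 - e \<le> upper u (u y)" using y(2) low0 by (simp add: dist_real_def abs_less_iff)
    thus "\<exists>\<alpha>. 0 < \<alpha> \<and> \<alpha> \<le> 1 \<and> upper u 0 - e \<le> upper u \<alpha>" using a by blast
  qed
qed




lemma goodLU_zero: "goodLU (\<lambda>_. 0) (\<lambda>_. 0) 0 0"
proof (rule goodLU_I)
  fix \<alpha> e :: real assume a: "0 < \<alpha>" "\<alpha> \<le> 1" "0 < e"
  show "\<exists>\<beta>. 0 < \<beta> \<and> \<beta> < \<alpha> \<and> (0::real) - e \<le> 0"
    using a by (intro exI[of _ "\<alpha>/2"]) simp
  show "\<exists>\<beta>. 0 < \<beta> \<and> \<beta> < \<alpha> \<and> (0::real) \<le> 0 + e"
    using a by (intro exI[of _ "\<alpha>/2"]) simp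
qed (auto intro: exI[of _ "1::real"])

lemma fzero_lu:
  assumes "0 \<le> \<alpha>" "\<alpha> \<le> 1"
  shows "lower fzero \<alpha> = 0 \<and> upper fzero \<alpha> = 0"
proof -
  have "level fzero \<alpha> = {0}"
  proof (cases "\<alpha> = 0")
    case True
    have "{t. 0 < fzero t} = {0}" by (auto simp: fzero_def)
    thus ?thesis using True by (simp add: level_def)
  next
    case False
    hence "0 < \<alpha>" using assms by simp
    thus ?thesis using False assms by (auto simp: level_def fzero_def)
  qed
  thus ?thesis by (simp add: lower_def upper_def)
qed

lemma fineF_fzero: "fineF fzero"
proof -
  have e: "lower fzero 0 = 0" "upper fzero 0 = 0" using fzero_lu[of 0] by simp_all
  show ?thesis unfolding fineF_def e by (rule goodLU_cong[OF goodLU_zero]) (simp add: fzero_lu)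
qed

lemma fineF_bounds:
  assumes f: "fineF u" and a: "0 \<le> \<alpha>" "\<alpha> \<le> 1"
  shows "lower u 0 \<le> lower u \<alpha> \<and> lower u \<alpha> \<le> upper u \<alpha> \<and> upper u \<alpha> \<le> upper u 0"
proof -
  note g = f[unfolded fineF_def]
  show ?thesis
  proof (cases "\<alpha> = 0")
    case True
    have "lower u 0 \<le> lower u 1" "lower u 1 \<le> upper u 1" "upper u 1 \<le> upper u 0"
      using gL_bnd[OF g, of 1] gLU[OF g, of 1] gU_bnd[OF g, of 1] by simp_all
    thus ?thesis using True by simp
  next
    case False
    hence a0: "0 < \<alpha>" using a by simp
    show ?thesis using gL_bnd[OF g a0 a(2)] gLU[OF g a0 a(2)] gU_bnd[OF g a0 a(2)] by simp
  qed
qed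

lemma fdist_ge:
  assumes fu: "fineF u" and fv: "fineF v"
  shows "\<bar>lower u 0 - lower v 0\<bar> \<le> fdist u v \<and> \<bar>upper u 0 - upper v 0\<bar> \<le> fdist u v"
proof -
  define f where "f \<alpha> = max \<bar>lower u \<alpha> - lower v \<alpha>\<bar> \<bar>upper u \<alpha> - upper v \<alpha>\<bar>" for \<alpha>
  define K where "K = (\<bar>lower u 0\<bar> + \<bar>upper u 0\<bar>) + (\<bar>lower v 0\<bar> + \<bar>upper v 0\<bar>)"
  have "f \<alpha> \<le> K" if "\<alpha> \<in> {0..1}" for \<alpha>
  proof -
    have a: "0 \<le> \<alpha>" "\<alpha> \<le> 1" using that by auto
    have bu: "lower u 0 \<le> lower u \<alpha> \<and> lower u \<alpha> \<le> upper u \<alpha> \<and> upper u \<alpha> \<le> upper u 0"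
      by (rule fineF_bounds[OF fu a])
    have bv: "lower v 0 \<le> lower v \<alpha> \<and> lower v \<alpha> \<le> upper v \<alpha> \<and> upper v \<alpha> \<le> upper v 0"
      by (rule fineF_bounds[OF fv a])
    show ?thesis unfolding f_def K_def using bu bv by (simp add: abs_le_iff) linarith
  qed
  hence bdd: "bdd_above (f ` {0..1})" by (rule bdd_aboveI2)
  have "f 0 \<le> fdist u v" unfolding fdist_def f_def[symmetric]
    by (rule cSUP_upper[OF _ bdd]) simp
  thus ?thesis by (simp add: f_def)
qed

lemma fdist_zero_le:
  assumes fu: "fineF u"
  shows "fdist u fzero \<le> max \<bar>lower u 0\<bar> \<bar>upper u 0\<bar>"
  unfolding fdist_def
proof (rule cSUP_least)
  show "{0..1::real} \<noteq> {}" by simp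
  fix \<alpha> :: real assume "\<alpha> \<in> {0..1}"
  hence a: "0 \<le> \<alpha>" "\<alpha> \<le> 1" by auto
  have bu: "lower u 0 \<le> lower u \<alpha> \<and> lower u \<alpha> \<le> upper u \<alpha> \<and> upper u \<alpha> \<le> upper u 0"
    by (rule fineF_bounds[OF fu a])
  show "max \<bar>lower u \<alpha> - lower fzero \<alpha>\<bar> \<bar>upper u \<alpha> - upper fzero \<alpha>\<bar> \<le> max \<bar>lower u 0\<bar> \<bar>upper u 0\<bar>"
    using fzero_lu[OF a] bu by (simp add: abs_le_iff) linarith
qed

theorem mainTheorem6:
  fixes p :: real and u :: "nat \<Rightarrow> fuzzy" and \<nu> :: fuzzy
  assumes "p > 0"
    and "\<And>n. fuzzy_number (u n)"
    and "fuzzy_number \<nu>"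
    and "Ep_summable_to p u \<nu>"
    and "(\<lambda>n. sqrt (real n) * fdist (u n) fzero) \<in> O(\<lambda>_. 1)"
  shows "\<exists>M>0. \<forall>n. fdist (fsum_upto u n) fzero < M"
proof -
  have p: "p > 0" by fact
  have fu: "fineF (u n)" for n using assms(2) by (rule fuzzy_fineF)
  have fnu: "fineF \<nu>" using assms(3) by (rule fuzzy_fineF)
  define a where "a n = lower (u n) 0" for n
  define b where "b n = upper (u n) 0" for n
  have sf: "fineF (fsum_upto u k) \<and> lower (fsum_upto u k) 0 = (\<Sum>i\<le>k. a i)
      \<and> upper (fsum_upto u k) 0 = (\<Sum>i\<le>k. b i)" for k
    unfolding a_def b_def by (rule fineF_fsum) (rule fu)
  define E where "E n = euler_mean p (fsum_upto u) n" for n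
  have Ef: "fineF (E n) \<and> lower (E n) 0 = 1/(p+1)^n * (\<Sum>k\<le>n. (real (n choose k) * p^(n-k)) * (\<Sum>i\<le>k. a i))
     \<and> upper (E n) 0 = 1/(p+1)^n * (\<Sum>k\<le>n. (real (n choose k) * p^(n-k)) * (\<Sum>i\<le>k. b i))" for n
  proof -
    define f where "f k = fscale (real (n choose k) * p^(n-k)) (fsum_upto u k)" for k
    have ff: "fineF (f k) \<and> lower (f k) 0 = (real (n choose k) * p^(n-k)) * (\<Sum>i\<le>k. a i)
       \<and> upper (f k) 0 = (real (n choose k) * p^(n-k)) * (\<Sum>i\<le>k. b i)" for k
      unfolding f_def using fineF_fscale[OF sf[THEN conjunct1], of "real (n choose k) * p^(n-k)" k] sf[of k] p
      by simp
    have fs: "fineF (fsum_upto f n) \<and> lower (fsum_upto f n) 0 = (\<Sum>k\<le>n. lower (f k) 0)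
      \<and> upper (fsum_upto f n) 0 = (\<Sum>k\<le>n. upper (f k) 0)"
      by (rule fineF_fsum) (use ff in blast)
    have "E n = fscale (1/(p+1)^n) (fsum_upto f n)" by (simp add: E_def euler_mean_def f_def[abs_def])
    moreover have "(0::real) \<le> 1/(p+1)^n" using p by simp
    ultimately show ?thesis using fineF_fscale[OF fs[THEN conjunct1], of "1/(p+1)^n"] fs ff by simp
  qed
  have "(\<lambda>n. fdist (E n) \<nu>) \<longlonglongrightarrow> 0" using assms(4) by (simp add: Ep_summable_to_def E_def)
  hence "Bseq (\<lambda>n. fdist (E n) \<nu>)" by (intro convergent_imp_Bseq convergentI)
  then obtain K where K: "\<And>n. norm (fdist (E n) \<nu>) \<le> K" unfolding Bseq_def by blast
  have TA: "\<forall>n. \<bar>1/(p+1)^n * (\<Sum>k\<le>n. (real (n choose k) * p^(n-k)) * (\<Sum>i\<le>k. a i))\<bar> \<le> \<bar>lower \<nu> 0\<bar> + K"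
  proof
    fix n
    have "\<bar>lower (E n) 0 - lower \<nu> 0\<bar> \<le> fdist (E n) \<nu>" using fdist_ge[OF Ef[THEN conjunct1] fnu] by simp
    moreover have "fdist (E n) \<nu> \<le> K" using K[of n] by simp
    ultimately show "\<bar>1/(p+1)^n * (\<Sum>k\<le>n. (real (n choose k) * p^(n-k)) * (\<Sum>i\<le>k. a i))\<bar> \<le> \<bar>lower \<nu> 0\<bar> + K"
      using Ef[of n] by linarith
  qed
  have TB: "\<forall>n. \<bar>1/(p+1)^n * (\<Sum>k\<le>n. (real (n choose k) * p^(n-k)) * (\<Sum>i\<le>k. b i))\<bar> \<le> \<bar>upper \<nu> 0\<bar> + K"
  proof
    fix n
    have "\<bar>upper (E n) 0 - upper \<nu> 0\<bar> \<le> fdist (E n) \<nu>" using fdist_ge[OF Ef[THEN conjunct1] fnu] by simp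
    moreover have "fdist (E n) \<nu> \<le> K" using K[of n] by simp
    ultimately show "\<bar>1/(p+1)^n * (\<Sum>k\<le>n. (real (n choose k) * p^(n-k)) * (\<Sum>i\<le>k. b i))\<bar> \<le> \<bar>upper \<nu> 0\<bar> + K"
      using Ef[of n] by linarith
  qed
  define D where "D j = sqrt (real j) * fdist (u j) fzero" for j
  have dab: "\<bar>a j\<bar> \<le> fdist (u j) fzero \<and> \<bar>b j\<bar> \<le> fdist (u j) fzero" for j
    using fdist_ge[OF fu fineF_fzero] fzero_lu[of 0] by (simp add: a_def b_def)
  have D0: "0 \<le> D j" for j
  proof -
    have "0 \<le> fdist (u j) fzero" using dab[of j] abs_ge_zero[of "a j"] by linarith
    thus ?thesis unfolding D_def by simp
  qed
  have Da: "\<bar>a j\<bar> * sqrt (real j) \<le> D j \<and> \<bar>b j\<bar> * sqrt (real j) \<le> D j" for j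
  proof -
    have s0: "0 \<le> sqrt (real j)" by simp
    have "\<bar>a j\<bar> * sqrt (real j) \<le> fdist (u j) fzero * sqrt (real j)"
      using dab[of j] s0 by (intro mult_right_mono) auto
    moreover have "\<bar>b j\<bar> * sqrt (real j) \<le> fdist (u j) fzero * sqrt (real j)"
      using dab[of j] s0 by (intro mult_right_mono) auto
    ultimately show ?thesis unfolding D_def by (simp add: mult.commute)
  qed
  obtain c where c: "c > 0" "eventually (\<lambda>n. norm (D n) \<le> c * norm (1::real)) at_top"
    using landau_o.bigE[OF assms(5)[folded D_def]] by blast
  then obtain N where N: "\<And>n. n \<ge> N \<Longrightarrow> norm (D n) \<le> c" unfolding eventually_at_top_linorder by auto
  define C where "C = c + (\<Sum>i<N. D i)"
  have DC: "D j \<le> C" for j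
  proof (cases "j \<ge> N")
    case True thus ?thesis using N[OF True] D0[of "N"] unfolding C_def
      by (smt (verit) D0 real_norm_def sum_nonneg)
  next
    case False
    hence "D j \<le> (\<Sum>i<N. D i)" by (intro member_le_sum) (auto intro: D0)
    thus ?thesis using c unfolding C_def by simp
  qed
  have ha: "\<forall>j\<ge>1. \<bar>a j\<bar> * sqrt (real j) \<le> C" using Da DC by (meson order_trans)
  have hb: "\<forall>j\<ge>1. \<bar>b j\<bar> * sqrt (real j) \<le> C" using Da DC by (meson order_trans)
  define Ba where "Ba = (\<bar>lower \<nu> 0\<bar> + K) + \<bar>a 0\<bar> + 4*C"
  define Bb where "Bb = (\<bar>upper \<nu> 0\<bar> + K) + \<bar>b 0\<bar> + 4*C"
  have SA: "\<bar>\<Sum>i\<le>m. a i\<bar> \<le> Ba" for m unfolding Ba_def by (rule tauber_real[OF p ha TA])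
  have SB: "\<bar>\<Sum>i\<le>m. b i\<bar> \<le> Bb" for m unfolding Bb_def by (rule tauber_real[OF p hb TB])
  define M where "M = \<bar>Ba\<bar> + \<bar>Bb\<bar> + 1"
  have "fdist (fsum_upto u n) fzero < M" for n
  proof -
    have "fdist (fsum_upto u n) fzero \<le> max \<bar>\<Sum>i\<le>n. a i\<bar> \<bar>\<Sum>i\<le>n. b i\<bar>"
      using fdist_zero_le[OF sf[THEN conjunct1, of n]] sf[of n] by simp
    thus ?thesis using SA[of n] SB[of n] unfolding M_def by linarith
  qed
  moreover have "M > 0" unfolding M_def by simp
  ultimately show ?thesis by blast
qed


end
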